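(* Let $\{G^k\}$ be a $B$-strongly connected sequence of digraphs on $\{1,\dots,I\}$, and let each $\mathbf{A}^k=(a_{ij}^k)$ be compliant with $G^k$ (constant $\kappa>0$) and column stochastic. Consider the condensed push-sum protocol with $\phi_{(i)}^0=1$, arbitrary $\mathbf{x}_{(i)}^0\in\mathbb{R}^m$, and $\phi_{(i)}^{k+1}=\sum_ja_{ij}^k\phi_{(j)}^k$, $\mathbf{x}_{(i)}^{k+1}=\frac{1}{\phi_{(i)}^{k+1}}\sum_ja_{ij}^k\phi_{(j)}^k\mathbf{x}_{(j)}^k$. Then for all $k\ge0$: (a) $\sum_{i}\phi_{(i)}^{k+1}\mathbf{x}_{(i)}^{k+1}=\sum_i\phi_{(i)}^k\mathbf{x}_{(i)}^k=\sum_i\phi_{(i)}^0\mathbf{x}_{(i)}^0$; (b) for all $i$, $$\Big\|\mathbf{x}_{(i)}^k-\frac1I\sum_{j=1}^I\phi_{(j)}^k\mathbf{x}_{(j)}^k\Big\|\le c_d\,\rho_d^k\,\|\mathbf{x}^0\|,$$ with $\tilde\kappa_d\triangleq\kappa^{2(I-1)B+1}/I$, $\rho_d\triangleq(1-\tilde\kappa_d^{(I-1)B})^{1/((I-1)B)}$, $c_d\triangleq\frac{2I}{\rho_d}\cdot\frac{2(1+\tilde\kappa_d^{-(I-1)B})}{1-\tilde\kappa_d^{(I-1)B}}$, and $\mathbf{x}^0=(\mathbf{x}^0_{(i)})_{i=1}^I$.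
   Context: A digraph at time $k$ is $G^k=(V,E^k)$, $V=\{1,\dots,I\}$, with edge $(j,i)\in E^k$ meaning $j$ can send to $i$. The sequence is $B$-strongly connected if there is an integer $B>0$ such that for every $k$ the digraph with edge set $\bigcup_{t=k}^{k+B-1}E^t$ is strongly connected. $\mathbf{A}^k$ is compliant with $G^k$ (constant $\kappa>0$) if $a_{ij}^k=0$ whenever $j\ne i$ and $(j,i)\notin E^k$, $a_{ij}^k\ge\kappa$ whenever $(j,i)\in E^k$, and $a_{ii}^k\ge\kappa$; it is column stochastic if its entries are nonnegative and $\mathbf{1}^T\mathbf{A}^k=\mathbf{1}^T$. *)

theory Defs
  imports "HOL-Analysis.Analysis"
begin

text \<open>Nodes are 1..I. Edges (j,i) mean j can send to i. A k i j is the (i,j) entry of A^k.\<close>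

definition strongly_connected :: "nat \<Rightarrow> (nat \<times> nat) set \<Rightarrow> bool" where
  "strongly_connected I E \<longleftrightarrow> (\<forall>i\<in>{1..I}. \<forall>j\<in>{1..I}. (i, j) \<in> E\<^sup>*)"

definition B_strongly_connected :: "nat \<Rightarrow> nat \<Rightarrow> (nat \<Rightarrow> (nat \<times> nat) set) \<Rightarrow> bool" where
  "B_strongly_connected I B E \<longleftrightarrow> B > 0 \<and>
     (\<forall>k. strongly_connected I (\<Union>t\<in>{k..k+B-1}. E t))"

definition compliant :: "nat \<Rightarrow> real \<Rightarrow> (nat \<times> nat) set \<Rightarrow> (nat \<Rightarrow> nat \<Rightarrow> real) \<Rightarrow> bool" where
  "compliant I \<kappa> E A \<longleftrightarrow>
     (\<forall>i\<in>{1..I}. \<forall>j\<in>{1..I}. j \<noteq> i \<and> (j, i) \<notin> E \<longrightarrow> A i j = 0) \<and>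
     (\<forall>i\<in>{1..I}. \<forall>j\<in>{1..I}. (j, i) \<in> E \<longrightarrow> A i j \<ge> \<kappa>) \<and>
     (\<forall>i\<in>{1..I}. A i i \<ge> \<kappa>)"

definition column_stochastic :: "nat \<Rightarrow> (nat \<Rightarrow> nat \<Rightarrow> real) \<Rightarrow> bool" where
  "column_stochastic I A \<longleftrightarrow>
     (\<forall>i\<in>{1..I}. \<forall>j\<in>{1..I}. A i j \<ge> 0) \<and>
     (\<forall>j\<in>{1..I}. (\<Sum>i=1..I. A i j) = 1)"

primrec ps_phi :: "nat \<Rightarrow> (nat \<Rightarrow> nat \<Rightarrow> nat \<Rightarrow> real) \<Rightarrow> nat \<Rightarrow> nat \<Rightarrow> real" where
  "ps_phi I A 0 i = 1"
| "ps_phi I A (Suc k) i = (\<Sum>j=1..I. A k i j * ps_phi I A k j)"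

primrec ps_x :: "nat \<Rightarrow> (nat \<Rightarrow> nat \<Rightarrow> nat \<Rightarrow> real) \<Rightarrow> (nat \<Rightarrow> 'a::real_vector) \<Rightarrow> nat \<Rightarrow> nat \<Rightarrow> 'a" where
  "ps_x I A x0 0 i = x0 i"
| "ps_x I A x0 (Suc k) i =
     (1 / ps_phi I A (Suc k) i) *\<^sub>R (\<Sum>j=1..I. (A k i j * ps_phi I A k j) *\<^sub>R ps_x I A x0 k j)"

definition stacked_norm :: "nat \<Rightarrow> (nat \<Rightarrow> 'a::real_normed_vector) \<Rightarrow> real" where
  "stacked_norm I x = sqrt (\<Sum>i=1..I. (norm (x i))\<^sup>2)"

definition kappa_d :: "nat \<Rightarrow> nat \<Rightarrow> real \<Rightarrow> real" where
  "kappa_d I B \<kappa> = \<kappa> ^ (2 * (I - 1) * B + 1) / real I"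

definition rho_d :: "nat \<Rightarrow> nat \<Rightarrow> real \<Rightarrow> real" where
  "rho_d I B \<kappa> = (1 - kappa_d I B \<kappa> ^ ((I - 1) * B)) powr (1 / real ((I - 1) * B))"

definition c_d :: "nat \<Rightarrow> nat \<Rightarrow> real \<Rightarrow> real" where
  "c_d I B \<kappa> = (2 * real I / rho_d I B \<kappa>) *
     (2 * (1 + 1 / kappa_d I B \<kappa> ^ ((I - 1) * B)) / (1 - kappa_d I B \<kappa> ^ ((I - 1) * B)))"

end

theory Submission
  imports Defs
begin


primrec prodm :: "nat \<Rightarrow> (nat \<Rightarrow> nat \<Rightarrow> nat \<Rightarrow> real) \<Rightarrow> nat \<Rightarrow> nat \<Rightarrow> nat \<Rightarrow> nat \<Rightarrow> real" where
  "prodm I A s 0 i j = (if i = j then 1 else 0)"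
| "prodm I A s (Suc t) i j = (\<Sum>l=1..I. A (s+t) i l * prodm I A s t l j)"

lemma exit_edge:
  assumes "(x,y) \<in> R\<^sup>*" "x \<in> S" "y \<notin> S"
  shows "\<exists>a b. (a,b) \<in> R \<and> a \<in> S \<and> b \<notin> S"
  using assms
proof (induction rule: rtrancl_induct)
  case base then show ?case by simp
next
  case (step y z)
  show ?case
  proof (cases "y \<in> S")
    case True then show ?thesis using step by blast
  next
    case False then show ?thesis using step by blast
  qed
qed

locale ps =
  fixes I B :: nat and \<kappa> :: real
    and E :: "nat \<Rightarrow> (nat \<times> nat) set"
    and A :: "nat \<Rightarrow> nat \<Rightarrow> nat \<Rightarrow> real"
  assumes edges: "\<And>k. E k \<subseteq> {1..I} \<times> {1..I}"
    and Bsc: "B_strongly_connected I B E"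
    and kpos: "\<kappa> > 0"
    and comp: "\<And>k. compliant I \<kappa> (E k) (A k)"
    and colst: "\<And>k. column_stochastic I (A k)"
begin

abbreviation "P \<equiv> prodm I A"
abbreviation "T \<equiv> (I - 1) * B"

lemma A_nonneg: "i\<in>{1..I} \<Longrightarrow> j\<in>{1..I} \<Longrightarrow> A k i j \<ge> 0"
  using colst[of k] unfolding column_stochastic_def by blast
lemma A_colsum: "j\<in>{1..I} \<Longrightarrow> (\<Sum>i=1..I. A k i j) = 1"
  using colst[of k] unfolding column_stochastic_def by blast
lemma A_diag: "i\<in>{1..I} \<Longrightarrow> A k i i \<ge> \<kappa>"
  using comp[of k] unfolding compliant_def by blast
lemma A_edge: "i\<in>{1..I} \<Longrightarrow> j\<in>{1..I} \<Longrightarrow> (j,i)\<in>E k \<Longrightarrow> A k i j \<ge> \<kappa>"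
  using comp[of k] unfolding compliant_def by blast

lemma Bpos: "B > 0" using Bsc unfolding B_strongly_connected_def by blast

lemma kle1: assumes "I \<ge> 1" shows "\<kappa> \<le> 1"
proof -
  have "A 0 1 1 \<le> (\<Sum>i=1..I. A 0 i 1)"
    by (rule member_le_sum) (use assms A_nonneg in auto)
  then show ?thesis using A_colsum[of 1 0] A_diag[of 1 0] assms by simp
qed

lemma sum_ge_term:
  fixes f :: "nat \<Rightarrow> real"
  assumes "i \<in> {1..I}" "\<And>j. j \<in> {1..I} \<Longrightarrow> f j \<ge> 0"
  shows "f i \<le> (\<Sum>j=1..I. f j)"
  by (rule member_le_sum) (use assms in auto)

lemma phi_pos: "i\<in>{1..I} \<Longrightarrow> ps_phi I A k i \<ge> \<kappa> ^ k"
proof (induction k arbitrary: i)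
  case 0 then show ?case by simp
next
  case (Suc k)
  have nn: "A k i j * ps_phi I A k j \<ge> 0" if j: "j\<in>{1..I}" for j
  proof -
    have "0 \<le> \<kappa>^k" using kpos by simp
    then have "0 \<le> ps_phi I A k j" using order.trans[OF _ Suc.IH[OF j]] by blast
    then show ?thesis using A_nonneg[OF Suc.prems j, of k] by simp
  qed
  have "A k i i * ps_phi I A k i \<le> ps_phi I A (Suc k) i"
    using sum_ge_term[OF Suc.prems nn] by simp
  moreover have "\<kappa> * \<kappa>^k \<le> A k i i * ps_phi I A k i"
    by (rule mult_mono) (use A_diag Suc kpos A_nonneg[OF Suc.prems Suc.prems, of k] in auto)
  ultimately show ?case by simp
qed

lemma phi_gt0: "i\<in>{1..I} \<Longrightarrow> ps_phi I A k i > 0"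
  using phi_pos[of i k] kpos by (meson less_le_trans zero_less_power)

lemma evo:
  fixes v :: "nat \<Rightarrow> nat \<Rightarrow> 'b::real_vector"
  assumes ev: "\<And>k i. i\<in>{1..I} \<Longrightarrow> v (Suc k) i = (\<Sum>l=1..I. A k i l *\<^sub>R v k l)"
  shows "i\<in>{1..I} \<Longrightarrow> v (s+t) i = (\<Sum>j=1..I. P s t i j *\<^sub>R v s j)"
proof (induction t arbitrary: i)
  case 0
  have "(\<Sum>j=1..I. P s 0 i j *\<^sub>R v s j) = (\<Sum>j=1..I. if i = j then v s j else 0)"
    by (rule sum.cong) auto
  then show ?case using 0 by simp
next
  case (Suc t)
  have "v (s + Suc t) i = (\<Sum>l=1..I. A (s+t) i l *\<^sub>R v (s+t) l)"
    using ev[OF Suc.prems, of "s+t"] by simp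
  also have "\<dots> = (\<Sum>l=1..I. A (s+t) i l *\<^sub>R (\<Sum>j=1..I. P s t l j *\<^sub>R v s j))"
    using Suc.IH by (intro sum.cong) auto
  also have "\<dots> = (\<Sum>l=1..I. \<Sum>j=1..I. (A (s+t) i l * P s t l j) *\<^sub>R v s j)"
    by (simp add: scaleR_sum_right)
  also have "\<dots> = (\<Sum>j=1..I. \<Sum>l=1..I. (A (s+t) i l * P s t l j) *\<^sub>R v s j)"
    by (rule sum.swap)
  also have "\<dots> = (\<Sum>j=1..I. P s (Suc t) i j *\<^sub>R v s j)"
    by (simp add: scaleR_sum_left)
  finally show ?case .
qed

lemma P_nonneg: "i\<in>{1..I} \<Longrightarrow> j\<in>{1..I} \<Longrightarrow> P s t i j \<ge> 0"
proof (induction t arbitrary: i)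
  case 0 then show ?case by simp
next
  case (Suc t)
  have nn2: "0 \<le> A (s+t) i l * P s t l j" if "l\<in>{1..I}" for l
    using Suc that A_nonneg by simp
  show ?case unfolding prodm.simps by (rule sum_nonneg) (use nn2 in auto)
qed

lemma P_colsum: "j\<in>{1..I} \<Longrightarrow> (\<Sum>i=1..I. P s t i j) = 1"
proof (induction t)
  case 0 then show ?case by simp
next
  case (Suc t)
  have "(\<Sum>i=1..I. P s (Suc t) i j) = (\<Sum>i=1..I. \<Sum>l=1..I. A (s+t) i l * P s t l j)" by simp
  also have "\<dots> = (\<Sum>l=1..I. \<Sum>i=1..I. A (s+t) i l * P s t l j)" by (rule sum.swap)
  also have "\<dots> = (\<Sum>l=1..I. P s t l j)"
    by (intro sum.cong refl) (subst sum_distrib_right[symmetric], simp only: A_colsum mult_1)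
  finally show ?case using Suc by simp
qed

definition N :: "nat \<Rightarrow> nat \<Rightarrow> nat \<Rightarrow> nat set" where
  "N s j t = {i\<in>{1..I}. P s t i j \<ge> \<kappa> ^ t}"

lemma N_sub: "N s j t \<subseteq> {1..I}" unfolding N_def by auto

lemma N_step: assumes j: "j\<in>{1..I}" shows "N s j t \<subseteq> N s j (Suc t)"
proof
  fix i assume i: "i \<in> N s j t"
  hence iI: "i\<in>{1..I}" and ge: "P s t i j \<ge> \<kappa>^t" unfolding N_def by auto
  have "A (s+t) i i * P s t i j \<le> P s (Suc t) i j"
    using sum_ge_term[OF iI, of "\<lambda>l. A (s+t) i l * P s t l j"] A_nonneg P_nonneg iI j by simp
  moreover have "\<kappa> * \<kappa>^t \<le> A (s+t) i i * P s t i j"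
    by (rule mult_mono) (use A_diag iI ge kpos A_nonneg[OF iI iI] in auto)
  ultimately show "i \<in> N s j (Suc t)" using iI unfolding N_def by simp
qed

lemma N_mono: assumes "j\<in>{1..I}" "t \<le> t'" shows "N s j t \<subseteq> N s j t'"
  using lift_Suc_mono_le[of "N s j", OF N_step[OF assms(1)] assms(2)] .

lemma N_edge: assumes j: "j\<in>{1..I}" and l: "l \<in> N s j t" and e: "(l,i) \<in> E (s+t)"
  shows "i \<in> N s j (Suc t)"
proof -
  have lI: "l\<in>{1..I}" and ge: "P s t l j \<ge> \<kappa>^t" using l unfolding N_def by auto
  have iI: "i \<in> {1..I}" using edges e by blast
  have "A (s+t) i l * P s t l j \<le> P s (Suc t) i j"
    using sum_ge_term[OF lI, of "\<lambda>l. A (s+t) i l * P s t l j"] A_nonneg P_nonneg iI j by simp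
  moreover have "\<kappa> * \<kappa>^t \<le> A (s+t) i l * P s t l j"
    by (rule mult_mono) (use A_edge[OF iI lI e] ge kpos in auto)
  ultimately show ?thesis using iI unfolding N_def by simp
qed

lemma N_block: assumes j: "j\<in>{1..I}" and l: "l \<in> N s j (q*B)"
  and e: "(l,i) \<in> (\<Union>t\<in>{s+q*B..s+q*B+B-1}. E t)"
  shows "i \<in> N s j (Suc q * B)"
proof -
  obtain t0 where t0: "t0 \<in> {s+q*B..s+q*B+B-1}" "(l,i) \<in> E t0" using e by blast
  define u where "u = t0 - (s + q*B)"
  have u: "u < B" "t0 = s + (q*B+u)" using t0 Bpos unfolding u_def by auto
  have "l \<in> N s j (q*B+u)" using N_mono[OF j, of "q*B" "q*B+u"] l by auto
  hence "i \<in> N s j (Suc (q*B+u))" using N_edge[OF j] t0 u by simp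
  moreover have "Suc (q*B+u) \<le> Suc q * B" using u by simp
  ultimately show ?thesis using N_mono[OF j] by blast
qed

lemma N_grow: assumes j: "j\<in>{1..I}"
  shows "N s j (q*B) = {1..I} \<or> card (N s j (q*B)) \<ge> q+1"
proof (induction q)
  case 0
  have "j \<in> N s j 0" using j unfolding N_def by simp
  then have "card (N s j 0) \<ge> 1"
    using N_sub[of s j 0] by (metis One_nat_def Suc_leI card_gt_0_iff empty_iff finite_atLeastAtMost finite_subset)
  then show ?case by simp
next
  case (Suc q)
  have sub: "N s j (q*B) \<subseteq> N s j (Suc q * B)" using N_mono[OF j] by simp
  show ?case
  proof (cases "N s j (q*B) = {1..I}")
    case True
    then show ?thesis using sub N_sub[of s j "Suc q * B"] by blast
  next
    case False
    then obtain i where i: "i \<in> {1..I}" "i \<notin> N s j (q*B)" using N_sub by blast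
    have "j \<in> N s j 0" using j unfolding N_def by simp
    then have jN: "j \<in> N s j (q*B)" using N_mono[OF j, of 0 "q*B" s] by auto
    have "strongly_connected I (\<Union>t\<in>{s+q*B..s+q*B+B-1}. E t)"
      using Bsc unfolding B_strongly_connected_def by blast
    hence ji: "(j,i) \<in> (\<Union>t\<in>{s+q*B..s+q*B+B-1}. E t)\<^sup>*" using i j unfolding strongly_connected_def by blast
    obtain a b where ab: "(a,b) \<in> (\<Union>t\<in>{s+q*B..s+q*B+B-1}. E t)" "a \<in> N s j (q*B)" "b \<notin> N s j (q*B)"
      using exit_edge[OF ji jN i(2)] by blast
    have fin: "finite (N s j t)" for t using N_sub[of s j t] finite_subset by blast
    have "b \<in> N s j (Suc q * B)" using N_block[OF j ab(2) ab(1)] .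
    hence "insert b (N s j (q*B)) \<subseteq> N s j (Suc q * B)" using sub by blast
    hence "card (insert b (N s j (q*B))) \<le> card (N s j (Suc q * B))"
      by (rule card_mono[OF fin])
    moreover have "card (insert b (N s j (q*B))) = card (N s j (q*B)) + 1"
      using card_insert_disjoint[OF fin ab(3)] by simp
    ultimately show ?thesis using Suc.IH False by auto
  qed
qed

lemma P_pos: assumes "i\<in>{1..I}" "j\<in>{1..I}" shows "P s T i j \<ge> \<kappa> ^ T"
proof -
  have I1: "I \<ge> 1" using assms by auto
  have "N s j T = {1..I}"
  proof -
    have "N s j T = {1..I} \<or> card (N s j T) \<ge> I"
      using N_grow[OF assms(2), of s "I-1"] I1 by simp
    moreover have "N s j T = {1..I}" if c: "card (N s j T) \<ge> I"
    proof (rule card_subset_eq[OF finite_atLeastAtMost N_sub])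
      show "card (N s j T) = card {1..I}"
        using c card_mono[OF finite_atLeastAtMost N_sub[of s j T]] by simp
    qed
    ultimately show ?thesis by blast
  qed
  then have "i \<in> N s j T" using assms(1) by simp
  then show ?thesis by (simp add: N_def)
qed

end


context ps
begin

definition L1 :: "(nat \<Rightarrow> real) \<Rightarrow> real" where
  "L1 w = (\<Sum>i=1..I. \<bar>w i\<bar>)"

lemma Ikappa_le1: assumes "I \<ge> 1" shows "real I * \<kappa>^T \<le> 1"
proof -
  have "(\<Sum>i=1..I. \<kappa>^T) \<le> (\<Sum>i=1..I. P 0 T i 1)"
    by (rule sum_mono) (use P_pos assms in auto)
  also have "\<dots> = 1" using P_colsum assms by simp
  finally show ?thesis by simp
qed

context
  fixes v :: "nat \<Rightarrow> nat \<Rightarrow> real"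
  assumes ev: "\<And>k i. i\<in>{1..I} \<Longrightarrow> v (Suc k) i = (\<Sum>l=1..I. A k i l * v k l)"
begin

lemma ev': "i\<in>{1..I} \<Longrightarrow> v (Suc k) i = (\<Sum>l=1..I. A k i l *\<^sub>R v k l)"
  using ev by simp

lemma v_rep: "i\<in>{1..I} \<Longrightarrow> v (s+t) i = (\<Sum>j=1..I. P s t i j * v s j)"
  using evo[of v, OF ev'] by simp

lemma L1_step: "L1 (v (Suc k)) \<le> L1 (v k)"
proof -
  have "L1 (v (Suc k)) = (\<Sum>i=1..I. \<bar>\<Sum>l=1..I. A k i l * v k l\<bar>)"
    unfolding L1_def by (intro sum.cong refl) (simp add: ev)
  also have "\<dots> \<le> (\<Sum>i=1..I. \<Sum>l=1..I. A k i l * \<bar>v k l\<bar>)"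
  proof (rule sum_mono)
    fix i assume i: "i \<in> {1..I}"
    have "\<bar>\<Sum>l=1..I. A k i l * v k l\<bar> \<le> (\<Sum>l=1..I. \<bar>A k i l * v k l\<bar>)" by (rule sum_abs)
    also have "\<dots> = (\<Sum>l=1..I. A k i l * \<bar>v k l\<bar>)"
      by (intro sum.cong refl) (simp add: abs_mult A_nonneg[OF i])
    finally show "\<bar>\<Sum>l=1..I. A k i l * v k l\<bar> \<le> (\<Sum>l=1..I. A k i l * \<bar>v k l\<bar>)" .
  qed
  also have "\<dots> = (\<Sum>l=1..I. \<Sum>i=1..I. A k i l * \<bar>v k l\<bar>)" by (rule sum.swap)
  also have "\<dots> = L1 (v k)" unfolding L1_def
    by (intro sum.cong refl) (subst sum_distrib_right[symmetric], simp only: A_colsum mult_1)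
  finally show ?thesis .
qed

lemma sum_step: "(\<Sum>i=1..I. v (Suc k) i) = (\<Sum>i=1..I. v k i)"
proof -
  have "(\<Sum>i=1..I. v (Suc k) i) = (\<Sum>i=1..I. \<Sum>l=1..I. A k i l * v k l)"
    by (intro sum.cong refl) (simp add: ev)
  also have "\<dots> = (\<Sum>l=1..I. \<Sum>i=1..I. A k i l * v k l)" by (rule sum.swap)
  also have "\<dots> = (\<Sum>l=1..I. v k l)"
    by (intro sum.cong refl) (subst sum_distrib_right[symmetric], simp only: A_colsum mult_1)
  finally show ?thesis .
qed

lemma sum_const: "(\<Sum>i=1..I. v k i) = (\<Sum>i=1..I. v 0 i)"
  by (induction k) (simp_all only: sum_step)

lemma block:
  assumes z: "(\<Sum>i=1..I. v s i) = 0" and I1: "I \<ge> 1"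
  shows "L1 (v (s+T)) \<le> (1 - real I * \<kappa>^T) * L1 (v s)"
proof -
  let ?c = "\<kappa>^T"
  have "L1 (v (s+T)) = (\<Sum>i=1..I. \<bar>\<Sum>j=1..I. (P s T i j - ?c) * v s j\<bar>)"
    unfolding L1_def
  proof (intro sum.cong refl)
    fix i assume i: "i \<in> {1..I}"
    have "(\<Sum>j=1..I. (P s T i j - ?c) * v s j) = (\<Sum>j=1..I. P s T i j * v s j) - ?c * (\<Sum>j=1..I. v s j)"
      by (simp add: left_diff_distrib sum_subtractf sum_distrib_left)
    then show "\<bar>v (s + T) i\<bar> = \<bar>\<Sum>j=1..I. (P s T i j - ?c) * v s j\<bar>"
      using v_rep[OF i] z by simp
  qed
  also have "\<dots> \<le> (\<Sum>i=1..I. \<Sum>j=1..I. (P s T i j - ?c) * \<bar>v s j\<bar>)"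
  proof (rule sum_mono)
    fix i assume i: "i \<in> {1..I}"
    have "\<bar>\<Sum>j=1..I. (P s T i j - ?c) * v s j\<bar> \<le> (\<Sum>j=1..I. \<bar>(P s T i j - ?c) * v s j\<bar>)" by (rule sum_abs)
    also have "\<dots> = (\<Sum>j=1..I. (P s T i j - ?c) * \<bar>v s j\<bar>)"
    proof (intro sum.cong refl)
      fix j assume j: "j \<in> {1..I}"
      have "P s T i j - ?c \<ge> 0" using P_pos[OF i j] by simp
      then show "\<bar>(P s T i j - ?c) * v s j\<bar> = (P s T i j - ?c) * \<bar>v s j\<bar>" by (simp add: abs_mult)
    qed
    finally show "\<bar>\<Sum>j=1..I. (P s T i j - ?c) * v s j\<bar> \<le> (\<Sum>j=1..I. (P s T i j - ?c) * \<bar>v s j\<bar>)" .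
  qed
  also have "\<dots> = (\<Sum>j=1..I. \<Sum>i=1..I. (P s T i j - ?c) * \<bar>v s j\<bar>)" by (rule sum.swap)
  also have "\<dots> = (\<Sum>j=1..I. (1 - real I * ?c) * \<bar>v s j\<bar>)"
  proof (intro sum.cong refl)
    fix j assume j: "j \<in> {1..I}"
    have "(\<Sum>i=1..I. (P s T i j - ?c) * \<bar>v s j\<bar>) = (\<Sum>i=1..I. (P s T i j - ?c)) * \<bar>v s j\<bar>"
      by (simp add: sum_distrib_right)
    also have "(\<Sum>i=1..I. (P s T i j - ?c)) = 1 - real I * ?c"
      using P_colsum[OF j] by (simp add: sum_subtractf)
    finally show "(\<Sum>i=1..I. (P s T i j - ?c) * \<bar>v s j\<bar>) = (1 - real I * ?c) * \<bar>v s j\<bar>" .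
  qed
  also have "\<dots> = (1 - real I * ?c) * L1 (v s)" unfolding L1_def by (simp add: sum_distrib_left)
  finally show ?thesis .
qed

lemma decay:
  assumes z: "(\<Sum>i=1..I. v 0 i) = 0" and I2: "I \<ge> 2"
  shows "L1 (v k) \<le> (1 - real I * \<kappa>^T) ^ (k div T) * L1 (v 0)"
proof -
  let ?r = "1 - real I * \<kappa>^T"
  have r0: "?r \<ge> 0" using Ikappa_le1 I2 by simp
  have q: "L1 (v (q*T)) \<le> ?r ^ q * L1 (v 0)" for q
  proof (induction q)
    case 0 then show ?case by simp
  next
    case (Suc q)
    have "(\<Sum>i=1..I. v (q*T) i) = 0" using sum_const z by simp
    then have "L1 (v (q*T + T)) \<le> ?r * L1 (v (q*T))" using block I2 by simp
    also have "\<dots> \<le> ?r * (?r ^ q * L1 (v 0))" using Suc r0 by (simp add: mult_left_mono)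
    finally show ?case by (simp add: add.commute mult.assoc)
  qed
  have "L1 (v k) \<le> L1 (v ((k div T) * T))"
    by (rule lift_Suc_antimono_le[of "\<lambda>n. L1 (v n)"]) (use L1_step in auto)
  also have "\<dots> \<le> ?r ^ (k div T) * L1 (v 0)" by (rule q)
  finally show ?thesis .
qed

end

lemma P_diff:
  assumes I2: "I \<ge> 2" and i: "i\<in>{1..I}" and j: "j\<in>{1..I}"
  shows "\<bar>P 0 k i j - P 0 k i 1\<bar> \<le> 2 * (1 - real I * \<kappa>^T) ^ (k div T)"
proof -
  define v where "v k i = P 0 k i j - P 0 k i 1" for k i
  have ev: "v (Suc k) i = (\<Sum>l=1..I. A k i l * v k l)" if "i\<in>{1..I}" for k i
    unfolding v_def by (simp add: right_diff_distrib sum_subtractf)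
  have z: "(\<Sum>i=1..I. v 0 i) = 0" unfolding v_def using j I2 by (simp add: sum_subtractf)
  have L0: "L1 (v 0) \<le> 2"
  proof -
    have "L1 (v 0) \<le> (\<Sum>i=1..I. (if i = j then 1 else 0) + (if i = 1 then 1 else 0))"
      unfolding L1_def v_def by (rule sum_mono) auto
    also have "\<dots> = 2" using j I2 by (simp add: sum.distrib)
    finally show ?thesis .
  qed
  have "\<bar>v k i\<bar> \<le> L1 (v k)" unfolding L1_def
    by (rule member_le_sum) (use i in auto)
  also have "\<dots> \<le> (1 - real I * \<kappa>^T) ^ (k div T) * L1 (v 0)"
    using decay[of v, OF ev z I2] by blast
  also have "\<dots> \<le> (1 - real I * \<kappa>^T) ^ (k div T) * 2"
    using L0 Ikappa_le1 I2 by (intro mult_left_mono) auto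
  finally show ?thesis unfolding v_def by simp
qed

lemma phi_sum: "(\<Sum>i=1..I. ps_phi I A k i) = real I"
proof -
  have "(\<Sum>i=1..I. ps_phi I A k i) = (\<Sum>i=1..I. ps_phi I A 0 i)"
    by (rule sum_const) simp
  then show ?thesis by simp
qed

lemma phi_lower: assumes i: "i\<in>{1..I}" shows "ps_phi I A k i \<ge> \<kappa>^T"
proof (cases "k \<ge> T")
  case True
  have k0: "0 \<le> \<kappa>^T" using kpos by simp
  have "ps_phi I A (k - T + T) i = (\<Sum>j=1..I. P (k-T) T i j * ps_phi I A (k-T) j)"
    by (rule v_rep) (use i in simp_all)
  also have "\<dots> \<ge> (\<Sum>j=1..I. \<kappa>^T * ps_phi I A (k-T) j)"
  proof (rule sum_mono)
    fix j assume j: "j \<in> {1..I}"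
    show "\<kappa>^T * ps_phi I A (k-T) j \<le> P (k-T) T i j * ps_phi I A (k-T) j"
      by (rule mult_right_mono) (use P_pos[OF i j] less_imp_le[OF phi_gt0[OF j]] in auto)
  qed
  also have "(\<Sum>j=1..I. \<kappa>^T * ps_phi I A (k-T) j) = \<kappa>^T * real I"
    by (simp only: sum_distrib_left[symmetric] phi_sum)
  also have "\<dots> \<ge> \<kappa>^T"
  proof -
    have "1 \<le> real I" using i by simp
    from mult_left_mono[OF this k0] show ?thesis by simp
  qed
  finally show ?thesis using True by simp
next
  case False
  have "\<kappa>^T \<le> \<kappa>^k" by (rule power_decreasing) (use False kpos kle1 i in auto)
  then show ?thesis using phi_pos[OF i, of k] by simp
qed

end


lemma arith_final:
  fixes \<kappa> sn :: real and I B k :: nat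
  assumes I2: "I \<ge> 2" and Bp: "B > 0" and kp: "0 < \<kappa>" and k1: "\<kappa> \<le> 1"
    and r0: "0 \<le> 1 - real I * \<kappa>^((I-1)*B)" and sn: "sn \<ge> 0"
  shows "(1/\<kappa>^((I-1)*B)) * (2 * (1 - real I * \<kappa>^((I-1)*B)) ^ (k div ((I-1)*B)) * (2 * real I * sn))
         \<le> c_d I B \<kappa> * rho_d I B \<kappa> ^ k * sn"
proof -
  define T where "T = (I-1)*B"
  have T1: "T \<ge> 1" using I2 Bp unfolding T_def by simp
  define K where "K = kappa_d I B \<kappa>"
  have K_def': "K = \<kappa>^(2*T+1) / real I" unfolding K_def kappa_d_def T_def by (simp add: mult.assoc)
  have Kp: "K > 0" unfolding K_def' using kp I2 by simp
  have p1: "\<kappa>^(2*T+1) \<le> \<kappa>" using power_decreasing[of 1 "2*T+1" \<kappa>] kp k1 by simp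
  have p2: "\<kappa>^(2*T+1) \<le> 1" using p1 k1 by simp
  have "\<kappa>^(2*T+1)/real I \<le> \<kappa>^(2*T+1)/1" by (rule divide_left_mono) (use I2 kp in auto)
  then have KleK: "K \<le> \<kappa>^(2*T+1)" unfolding K_def' by simp
  have Kk: "K \<le> \<kappa>" using KleK p1 by simp
  have Khalf: "K \<le> 1/2" unfolding K_def' using p2 I2
    by (simp add: divide_le_eq)
  define e where "e = K^T"
  have ep: "e > 0" unfolding e_def using Kp by simp
  have ek: "e \<le> \<kappa>^T" unfolding e_def by (rule power_mono) (use Kk Kp in auto)
  have eK: "e \<le> K" unfolding e_def using power_decreasing[of 1 T K] T1 Kp Khalf by simp
  have e1: "e < 1" using eK Khalf by simp
  define r where "r = 1 - real I * \<kappa>^T"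
  have r0': "0 \<le> r" using r0 unfolding r_def T_def .
  have kT: "\<kappa>^T \<le> real I * \<kappa>^T" using I2 kp by (simp add: mult_le_cancel_right1)
  have re: "r \<le> 1 - e" unfolding r_def using ek kT by simp
  define \<rho> where "\<rho> = rho_d I B \<kappa>"
  have \<rho>_def': "\<rho> = (1 - e) powr (1 / real T)" unfolding \<rho>_def rho_d_def e_def K_def T_def by simp
  have \<rho>p: "\<rho> > 0" unfolding \<rho>_def' using e1 by simp
  have \<rho>1: "\<rho> \<le> 1" unfolding \<rho>_def' using e1 ep by (intro powr_le1) auto
  define q where "q = k div T"
  have "\<rho> ^ k = (1 - e) powr (real k / real T)"
    unfolding \<rho>_def' using e1 by (simp add: powr_realpow[symmetric] powr_powr)
  also have "\<dots> \<ge> (1 - e) powr (real (q + 1))"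
  proof (rule powr_mono')
    have "real k < real (Suc q) * real T" unfolding q_def using T1
      by (metis Suc_leI div_less_iff_less_mult div_le_mono div_mult_self1_is_m le_less_trans lessI less_le_trans
           not_less not_one_le_zero of_nat_less_iff of_nat_mult nat_less_le zero_less_Suc)
    then show "real k / real T \<le> real (q + 1)" using T1 by (simp add: divide_le_eq)
  qed (use e1 ep in auto)
  also have "(1 - e) powr (real (q + 1)) = (1 - e)^(q+1)" using e1 by (intro powr_realpow) simp
  finally have rk: "(1-e)^(q+1) \<le> \<rho>^k" .
  have cd: "c_d I B \<kappa> = (2 * real I / \<rho>) * (2 * (1 + 1/e) / (1 - e))"
    unfolding c_d_def \<rho>_def e_def K_def T_def by simp
  have "4 * real I * (r^q / \<kappa>^T) \<le> 4 * real I * ((1-e)^q / e)"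
  proof -
    have "r^q \<le> (1-e)^q" by (rule power_mono) (use re r0' in auto)
    moreover have "1 / \<kappa>^T \<le> 1 / e" using ek ep by (simp add: frac_le)
    ultimately have "r^q * (1/\<kappa>^T) \<le> (1-e)^q * (1/e)"
      by (intro mult_mono) (use e1 r0' kp in auto)
    then have "r^q / \<kappa>^T \<le> (1-e)^q / e" by simp
    then show ?thesis using I2 by (intro mult_left_mono) auto
  qed
  also have "\<dots> \<le> (2 * real I / \<rho>) * (2 * (1 + 1/e) / (1 - e)) * (1-e)^(q+1)"
  proof -
    have ne: "1 - e \<noteq> 0" "\<rho> \<noteq> 0" "e \<noteq> 0" using e1 \<rho>p ep by auto
    then have eq: "(2 * real I / \<rho>) * (2 * (1 + 1/e) / (1 - e)) * (1-e)^(q+1)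
        = 4 * real I * ((1 + 1/e) / \<rho>) * (1-e)^q"
    proof -
      have g: "\<And>a b d x y::real. d \<noteq> 0 \<Longrightarrow> y \<noteq> 0 \<Longrightarrow> (2*x/y)*(2*a/d)*(b*d) = 4*x*(a/y)*b"
        by (simp add: field_simps)
      have p: "(1-e)^(q+1) = (1-e)^q * (1-e)" by simp
      show ?thesis by (subst p) (rule g[OF ne(1) ne(2)])
    qed
    have "1/e \<le> (1 + 1/e) / \<rho>"
    proof -
      have "1/e \<le> 1 + 1/e" by simp
      also have "\<dots> \<le> (1 + 1/e) / \<rho>" using \<rho>p \<rho>1 ep
        using mult_left_mono[OF \<rho>1, of "1+1/e"] \<rho>p ep by (simp add: le_divide_eq)
      finally show ?thesis .
    qed
    then have "4 * real I * ((1-e)^q / e) \<le> 4 * real I * ((1 + 1/e) / \<rho>) * (1-e)^q"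
      using e1 I2 by (simp add: mult_left_mono mult_right_mono divide_inverse mult.assoc)
    then show ?thesis using eq by simp
  qed
  also have "\<dots> \<le> c_d I B \<kappa> * \<rho>^k"
  proof -
    have "0 \<le> (2 * real I / \<rho>) * (2 * (1 + 1/e) / (1 - e))" using \<rho>p ep e1 by simp
    then show ?thesis unfolding cd using rk by (intro mult_left_mono)
  qed
  finally have main: "4 * real I * (r^q / \<kappa>^T) \<le> c_d I B \<kappa> * \<rho>^k" .
  have "(1/\<kappa>^T) * (2 * r ^ q * (2 * real I * sn)) = (4 * real I * (r^q / \<kappa>^T)) * sn"
    by (simp add: divide_inverse mult_ac)
  also have "\<dots> \<le> c_d I B \<kappa> * \<rho>^k * sn" using main sn by (rule mult_right_mono)
  finally show ?thesis unfolding r_def q_def T_def \<rho>_def .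
qed



context ps
begin

context
  fixes x0 :: "nat \<Rightarrow> 'b::real_normed_vector"
begin

abbreviation "z k i \<equiv> ps_phi I A k i *\<^sub>R ps_x I A x0 k i"

lemma z_evo: "i\<in>{1..I} \<Longrightarrow> z (Suc k) i = (\<Sum>l=1..I. A k i l *\<^sub>R z k l)"
proof -
  assume i: "i\<in>{1..I}"
  have ne: "ps_phi I A (Suc k) i \<noteq> 0" using phi_gt0[OF i] by (metis less_irrefl)
  have "z (Suc k) i = (\<Sum>j=1..I. (A k i j * ps_phi I A k j) *\<^sub>R ps_x I A x0 k j)"
    using ne by (simp only: ps_x.simps scaleR_scaleR) simp
  also have "\<dots> = (\<Sum>l=1..I. A k i l *\<^sub>R z k l)" by (simp add: scaleR_scaleR)
  finally show ?thesis .
qed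

lemma z_sum_step: "(\<Sum>i=1..I. z (Suc k) i) = (\<Sum>i=1..I. z k i)"
proof -
  have "(\<Sum>i=1..I. z (Suc k) i) = (\<Sum>i=1..I. \<Sum>l=1..I. A k i l *\<^sub>R z k l)"
    by (intro sum.cong refl) (simp only: z_evo)
  also have "\<dots> = (\<Sum>l=1..I. \<Sum>i=1..I. A k i l *\<^sub>R z k l)" by (rule sum.swap)
  also have "\<dots> = (\<Sum>l=1..I. z k l)"
    by (intro sum.cong refl) (subst scaleR_sum_left[symmetric], simp only: A_colsum scaleR_one)
  finally show ?thesis .
qed

lemma z_sum0: "(\<Sum>i=1..I. z k i) = (\<Sum>i=1..I. ps_phi I A 0 i *\<^sub>R x0 i)"
  by (induction k) (simp_all only: z_sum_step ps_x.simps(1))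

lemma z_rep: "i\<in>{1..I} \<Longrightarrow> z k i = (\<Sum>j=1..I. P 0 k i j *\<^sub>R x0 j)"
  using evo[of z, OF z_evo, of i 0 k] by simp

lemma phi_rep: "i\<in>{1..I} \<Longrightarrow> ps_phi I A k i = (\<Sum>j=1..I. P 0 k i j)"
  using v_rep[of "ps_phi I A" i 0 k] by simp

lemma stacked_ge: "j\<in>{1..I} \<Longrightarrow> norm (x0 j) \<le> stacked_norm I x0"
proof -
  assume j: "j\<in>{1..I}"
  have "(norm (x0 j))^2 \<le> (\<Sum>i=1..I. (norm (x0 i))^2)"
    by (rule member_le_sum) (use j in auto)
  then have "sqrt ((norm (x0 j))^2) \<le> stacked_norm I x0"
    unfolding stacked_norm_def by (rule real_sqrt_le_mono)
  then show ?thesis by simp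
qed

lemma main_bound:
  assumes I2: "I \<ge> 2" and i: "i\<in>{1..I}"
  shows "norm (ps_x I A x0 k i - (1/real I) *\<^sub>R (\<Sum>j=1..I. x0 j))
     \<le> (1/\<kappa>^T) * (2 * (1 - real I * \<kappa>^T) ^ (k div T) * (2 * real I * stacked_norm I x0))"
proof -
  define S where "S = (\<Sum>j=1..I. x0 j)"
  define c where "c = (1/real I) *\<^sub>R S"
  define r where "r = 2 * (1 - real I * \<kappa>^T) ^ (k div T)"
  define \<phi> where "\<phi> = ps_phi I A k i"
  have \<phi>p: "\<phi> > 0" unfolding \<phi>_def using phi_gt0[OF i] .
  have \<phi>l: "\<phi> \<ge> \<kappa>^T" unfolding \<phi>_def using phi_lower[OF i] .
  have Ic: "real I *\<^sub>R c = S" unfolding c_def using I2 by simp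
  have sz: "(\<Sum>j=1..I. (x0 j - c)) = 0"
    using Ic by (simp add: sum_subtractf S_def sum_constant_scaleR)
  have D: "z k i - \<phi> *\<^sub>R c = (\<Sum>j=1..I. (P 0 k i j - P 0 k i 1) *\<^sub>R (x0 j - c))"
  proof -
    have "z k i - \<phi> *\<^sub>R c = (\<Sum>j=1..I. P 0 k i j *\<^sub>R x0 j) - (\<Sum>j=1..I. P 0 k i j) *\<^sub>R c"
      unfolding \<phi>_def using z_rep[OF i] phi_rep[OF i] by simp
    also have "\<dots> = (\<Sum>j=1..I. P 0 k i j *\<^sub>R (x0 j - c))"
      by (simp add: scaleR_sum_left sum_subtractf scaleR_diff_right)
    also have "\<dots> = (\<Sum>j=1..I. P 0 k i j *\<^sub>R (x0 j - c)) - P 0 k i 1 *\<^sub>R (\<Sum>j=1..I. (x0 j - c))"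
      using sz by simp
    also have "\<dots> = (\<Sum>j=1..I. (P 0 k i j - P 0 k i 1) *\<^sub>R (x0 j - c))"
      by (simp only: scaleR_diff_left scaleR_sum_right sum_subtractf[of "\<lambda>j. P 0 k i j *\<^sub>R (x0 j - c)" "\<lambda>j. P 0 k i 1 *\<^sub>R (x0 j - c)"])
    finally show ?thesis .
  qed
  have nD: "norm (z k i - \<phi> *\<^sub>R c) \<le> r * (\<Sum>j=1..I. norm (x0 j - c))"
  proof -
    have "norm (z k i - \<phi> *\<^sub>R c) \<le> (\<Sum>j=1..I. norm ((P 0 k i j - P 0 k i 1) *\<^sub>R (x0 j - c)))"
      unfolding D by (rule norm_sum)
    also have "\<dots> \<le> (\<Sum>j=1..I. r * norm (x0 j - c))"
    proof (rule sum_mono)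
      fix j assume j: "j\<in>{1..I}"
      show "norm ((P 0 k i j - P 0 k i 1) *\<^sub>R (x0 j - c)) \<le> r * norm (x0 j - c)"
        unfolding r_def using P_diff[OF I2 i j, of k] by (simp add: mult_right_mono)
    qed
    finally show ?thesis by (simp add: sum_distrib_left)
  qed
  have sn: "(\<Sum>j=1..I. norm (x0 j - c)) \<le> 2 * real I * stacked_norm I x0"
  proof -
    have "(\<Sum>j=1..I. norm (x0 j - c)) \<le> (\<Sum>j=1..I. norm (x0 j) + norm c)"
      by (rule sum_mono) (rule norm_triangle_ineq4)
    also have "\<dots> = (\<Sum>j=1..I. norm (x0 j)) + norm S"
      using I2 by (simp add: sum.distrib c_def)
    also have "\<dots> \<le> 2 * (\<Sum>j=1..I. norm (x0 j))"
      unfolding S_def using norm_sum[of x0 "{1..I}"] by simp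
    also have "\<dots> \<le> 2 * (\<Sum>j=1..I. stacked_norm I x0)"
    proof -
      have "(\<Sum>j=1..I. norm (x0 j)) \<le> (\<Sum>j=1..I. stacked_norm I x0)"
        by (rule sum_mono) (rule stacked_ge)
      then show ?thesis by simp
    qed
    finally show ?thesis by simp
  qed
  have r0: "r \<ge> 0" unfolding r_def using Ikappa_le1 I2 by simp
  have "ps_x I A x0 k i - c = (1/\<phi>) *\<^sub>R (z k i - \<phi> *\<^sub>R c)"
    using \<phi>p unfolding \<phi>_def by (simp add: scaleR_diff_right)
  then have "norm (ps_x I A x0 k i - c) = (1/\<phi>) * norm (z k i - \<phi> *\<^sub>R c)"
    using \<phi>p by simp
  also have "\<dots> \<le> (1/\<kappa>^T) * (r * (2 * real I * stacked_norm I x0))"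
  proof (rule mult_mono)
    show "1/\<phi> \<le> 1/\<kappa>^T" using \<phi>l kpos by (simp add: frac_le)
    show "norm (z k i - \<phi> *\<^sub>R c) \<le> r * (2 * real I * stacked_norm I x0)"
      using nD sn r0 by (meson mult_left_mono order.trans)
  qed (use kpos in auto)
  finally show ?thesis unfolding c_def S_def r_def by (simp add: mult.assoc)
qed

end
end

theorem mainTheorem12:
  fixes I B :: nat and \<kappa> :: real
    and E :: "nat \<Rightarrow> (nat \<times> nat) set"
    and A :: "nat \<Rightarrow> nat \<Rightarrow> nat \<Rightarrow> real"
    and x0 :: "nat \<Rightarrow> real ^ 'm"
  assumes edges: "\<And>k. E k \<subseteq> {1..I} \<times> {1..I}"
    and Bsc: "B_strongly_connected I B E"
    and kpos: "\<kappa> > 0"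
    and comp: "\<And>k. compliant I \<kappa> (E k) (A k)"
    and colst: "\<And>k. column_stochastic I (A k)"
  shows "(\<forall>k. (\<Sum>i=1..I. ps_phi I A (Suc k) i *\<^sub>R ps_x I A x0 (Suc k) i)
               = (\<Sum>i=1..I. ps_phi I A k i *\<^sub>R ps_x I A x0 k i)
          \<and> (\<Sum>i=1..I. ps_phi I A k i *\<^sub>R ps_x I A x0 k i)
               = (\<Sum>i=1..I. ps_phi I A 0 i *\<^sub>R x0 i))
       \<and> (\<forall>k. \<forall>i\<in>{1..I}.
           norm (ps_x I A x0 k i - (1 / real I) *\<^sub>R (\<Sum>j=1..I. ps_phi I A k j *\<^sub>R ps_x I A x0 k j))
             \<le> c_d I B \<kappa> * rho_d I B \<kappa> ^ k * stacked_norm I x0)"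
proof -
  interpret ps I B \<kappa> E A
    by (unfold_locales) (use edges Bsc kpos comp colst in auto)
  have partA: "\<forall>k. (\<Sum>i=1..I. ps_phi I A (Suc k) i *\<^sub>R ps_x I A x0 (Suc k) i)
               = (\<Sum>i=1..I. ps_phi I A k i *\<^sub>R ps_x I A x0 k i)
          \<and> (\<Sum>i=1..I. ps_phi I A k i *\<^sub>R ps_x I A x0 k i)
               = (\<Sum>i=1..I. ps_phi I A 0 i *\<^sub>R x0 i)"
    using z_sum_step z_sum0 by blast
  have partB: "norm (ps_x I A x0 k i - (1 / real I) *\<^sub>R (\<Sum>j=1..I. ps_phi I A k j *\<^sub>R ps_x I A x0 k j))
             \<le> c_d I B \<kappa> * rho_d I B \<kappa> ^ k * stacked_norm I x0" if i: "i\<in>{1..I}" for k i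
  proof (cases "I = 1")
    case True
    have i1: "i = 1" using i True by simp
    have "ps_phi I A k 1 = 1" using phi_sum[of k] True by simp
    then have "norm (ps_x I A x0 k i - (1 / real I) *\<^sub>R (\<Sum>j=1..I. ps_phi I A k j *\<^sub>R ps_x I A x0 k j)) = 0"
      using True i1 by simp
    moreover have "c_d I B \<kappa> = 0" using True unfolding c_d_def rho_d_def by simp
    ultimately show ?thesis by simp
  next
    case False
    then have I2: "I \<ge> 2" using i by simp
    have eq: "(\<Sum>j=1..I. ps_phi I A k j *\<^sub>R ps_x I A x0 k j) = (\<Sum>j=1..I. x0 j)"
      by (simp only: z_sum0 ps_phi.simps(1) scaleR_one)
    have "norm (ps_x I A x0 k i - (1 / real I) *\<^sub>R (\<Sum>j=1..I. ps_phi I A k j *\<^sub>R ps_x I A x0 k j))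
      \<le> (1/\<kappa>^T) * (2 * (1 - real I * \<kappa>^T) ^ (k div T) * (2 * real I * stacked_norm I x0))"
      unfolding eq by (rule main_bound[OF I2 i])
    also have "\<dots> \<le> c_d I B \<kappa> * rho_d I B \<kappa> ^ k * stacked_norm I x0"
    proof (rule arith_final[OF I2 Bpos kpos kle1])
      show "1 \<le> I" using I2 by simp
      show "0 \<le> 1 - real I * \<kappa> ^ T" using Ikappa_le1 I2 by simp
      show "0 \<le> stacked_norm I x0" unfolding stacked_norm_def by (simp add: sum_nonneg)
    qed
    finally show ?thesis .
  qed
  show ?thesis using partA partB by blast
qed


end
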